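(* Let $\mathbf{QL}_1\subseteq\mathbf{QL}_2$ be intermediate predicate logics with the same propositional fragment $\mathbf{L}$. Suppose Herbrand's theorem for existential formulas holds in $\mathbf{QL}_2$. Then for every existential formula $A$, $\vdash_{\mathbf{QL}_1}A$ iff $\vdash_{\mathbf{QL}_2}A$. If moreover $\mathbf{QL}_1$ proves all instances of $\forall x(C(x)\lor B)\to(\forall x\,C(x)\lor B)$ ($x$ not free in $B$), then the same equivalence holds for every prenex formula $A$.
   Context: Intermediate predicate logic: a set of first-order formulas containing intuitionistic predicate logic, contained in classical predicate logic, closed under substitution, modus ponens and the quantifier rules (from $B\to A(x)$ infer $B\to\forall y\,A(y)$; from $A(x)\to B$ infer $\exists y\,A(y)\to B$; $x$ not free in the conclusion). The propositional fragment is the set of its propositional formulas; $\vdash_{\mathbf{L}}$ on quantifier-free formulas means derivability by substitution instances of theorems of $\mathbf{L}$ and modus ponens. An existential formula is one of the form $\exists x_1\dots\exists x_n\,A'(x_1,\dots,x_n)$ with $A'$ quantifier-free. Herbrand's theorem for existential formulas holds in $\mathbf{QL}_2$ if whenever $\vdash_{\mathbf{QL}_2}\exists x_1\dots\exists x_n\,A'(x_1,\dots,x_n)$ ($A'$ quantifier-free), there are terms $t_{ij}$ with $\vdash_{\mathbf{L}}\bigvee_{j=1}^k A'(t_{1j},\dots,t_{nj})$. For a prenex formula $A$, its Herbrand form $H(A)$ is the existential formula obtained by deleting each universal quantifier $\forall y$ and replacing $y$ by $f_y(x_1,\dots,x_k)$, where $f_y$ is a new function symbol and $x_1,\dots,x_k$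 are the existentially quantified variables whose quantifiers precede $\forall y$. *)

theory Defs
  imports Main
begin

text \<open>Terms: variables (de Bruijn indices) and applications of function symbols
  (infinitely many function symbols of every arity; 0-ary ones are constants).\<close>
datatype trm = Var nat | Fun nat "trm list"

text \<open>Predicate symbols are named by a natural number; the arity is the
  length of the argument list (so a predicate is identified by name and arity).
  Propositional variables are 0-ary predicates. \<open>Forall\<close>/\<open>Exists\<close> bind index 0.\<close>
datatype fm =
    FF
  | Pr nat "trm list"
  | Conj fm fm
  | Disj fm fm
  | Impl fm fm
  | Forall fm
  | Exists fm

definition Neg :: "fm \<Rightarrow> fm" where "Neg A = Impl A FF"

fun substt :: "(nat \<Rightarrow> trm) \<Rightarrow> trm \<Rightarrow> trm" where
  "substt s (Var i) = s i"
| "substt s (Fun f ts) = Fun f (map (substt s) ts)"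

definition shift_sub :: "(nat \<Rightarrow> trm) \<Rightarrow> nat \<Rightarrow> trm" where
  "shift_sub s i = (case i of 0 \<Rightarrow> Var 0 | Suc j \<Rightarrow> substt (\<lambda>k. Var (Suc k)) (s j))"

fun substf :: "(nat \<Rightarrow> trm) \<Rightarrow> fm \<Rightarrow> fm" where
  "substf s FF = FF"
| "substf s (Pr p ts) = Pr p (map (substt s) ts)"
| "substf s (Conj A B) = Conj (substf s A) (substf s B)"
| "substf s (Disj A B) = Disj (substf s A) (substf s B)"
| "substf s (Impl A B) = Impl (substf s A) (substf s B)"
| "substf s (Forall A) = Forall (substf (shift_sub s) A)"
| "substf s (Exists A) = Exists (substf (shift_sub s) A)"

text \<open>Shift all free variables up by one (so variable 0 is not free in the result).\<close>
definition liftf :: "fm \<Rightarrow> fm" where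
  "liftf A = substf (\<lambda>i. Var (Suc i)) A"

definition inst1 :: "fm \<Rightarrow> trm \<Rightarrow> fm" where
  "inst1 A t = substf (\<lambda>i. case i of 0 \<Rightarrow> t | Suc j \<Rightarrow> Var j) A"

text \<open>Uniform predicate substitution: the predicate p of arity n is replaced by the
  formula \<open>\<sigma> p n\<close>, whose free variables 0..n-1 are the argument places and whose
  remaining free variables n, n+1, ... are the parameters 0, 1, ... (shifted
  correctly under binders; d counts the binders passed).\<close>
fun psubst_d :: "(nat \<Rightarrow> nat \<Rightarrow> fm) \<Rightarrow> nat \<Rightarrow> fm \<Rightarrow> fm" where
  "psubst_d \<sigma> d FF = FF"
| "psubst_d \<sigma> d (Pr p ts) =
     substf (\<lambda>i. if i < length ts then ts ! i else Var (i - length ts + d)) (\<sigma> p (length ts))"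
| "psubst_d \<sigma> d (Conj A B) = Conj (psubst_d \<sigma> d A) (psubst_d \<sigma> d B)"
| "psubst_d \<sigma> d (Disj A B) = Disj (psubst_d \<sigma> d A) (psubst_d \<sigma> d B)"
| "psubst_d \<sigma> d (Impl A B) = Impl (psubst_d \<sigma> d A) (psubst_d \<sigma> d B)"
| "psubst_d \<sigma> d (Forall A) = Forall (psubst_d \<sigma> (Suc d) A)"
| "psubst_d \<sigma> d (Exists A) = Exists (psubst_d \<sigma> (Suc d) A)"

definition psubst :: "(nat \<Rightarrow> nat \<Rightarrow> fm) \<Rightarrow> fm \<Rightarrow> fm" where
  "psubst \<sigma> A = psubst_d \<sigma> 0 A"

fun qfree :: "fm \<Rightarrow> bool" where
  "qfree FF = True"
| "qfree (Pr p ts) = True"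
| "qfree (Conj A B) = (qfree A \<and> qfree B)"
| "qfree (Disj A B) = (qfree A \<and> qfree B)"
| "qfree (Impl A B) = (qfree A \<and> qfree B)"
| "qfree (Forall A) = False"
| "qfree (Exists A) = False"

fun propositional :: "fm \<Rightarrow> bool" where
  "propositional FF = True"
| "propositional (Pr p ts) = (ts = [])"
| "propositional (Conj A B) = (propositional A \<and> propositional B)"
| "propositional (Disj A B) = (propositional A \<and> propositional B)"
| "propositional (Impl A B) = (propositional A \<and> propositional B)"
| "propositional (Forall A) = False"
| "propositional (Exists A) = False"

inductive deriv :: "fm set \<Rightarrow> fm \<Rightarrow> bool" for Ax :: "fm set" where
  ax_extra: "A \<in> Ax \<Longrightarrow> deriv Ax A"
| ax_K: "deriv Ax (Impl A (Impl B A))"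
| ax_S: "deriv Ax (Impl (Impl A B) (Impl (Impl A (Impl B C)) (Impl A C)))"
| ax_ConjI: "deriv Ax (Impl A (Impl B (Conj A B)))"
| ax_ConjE1: "deriv Ax (Impl (Conj A B) A)"
| ax_ConjE2: "deriv Ax (Impl (Conj A B) B)"
| ax_DisjI1: "deriv Ax (Impl A (Disj A B))"
| ax_DisjI2: "deriv Ax (Impl B (Disj A B))"
| ax_DisjE: "deriv Ax (Impl (Impl A C) (Impl (Impl B C) (Impl (Disj A B) C)))"
| ax_FF: "deriv Ax (Impl FF A)"
| ax_AllE: "deriv Ax (Impl (Forall A) (inst1 A t))"
| ax_ExI: "deriv Ax (Impl (inst1 A t) (Exists A))"
| mp: "deriv Ax (Impl A B) \<Longrightarrow> deriv Ax A \<Longrightarrow> deriv Ax B"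
| all_rule: "deriv Ax (Impl (liftf B) A) \<Longrightarrow> deriv Ax (Impl B (Forall A))"
| ex_rule: "deriv Ax (Impl A (liftf B)) \<Longrightarrow> deriv Ax (Impl (Exists A) B)"

definition IQC :: "fm set" where "IQC = {A. deriv {} A}"

definition CQC :: "fm set" where
  "CQC = {A. deriv {Impl (Neg (Neg B)) B | B. True} A}"

definition intermediate :: "fm set \<Rightarrow> bool" where
  "intermediate L \<longleftrightarrow>
     IQC \<subseteq> L \<and> L \<subseteq> CQC
   \<and> (\<forall>A B. Impl A B \<in> L \<longrightarrow> A \<in> L \<longrightarrow> B \<in> L)
   \<and> (\<forall>A B. Impl (liftf B) A \<in> L \<longrightarrow> Impl B (Forall A) \<in> L)
   \<and> (\<forall>A B. Impl A (liftf B) \<in> L \<longrightarrow> Impl (Exists A) B \<in> L)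
   \<and> (\<forall>\<sigma> A. A \<in> L \<longrightarrow> psubst \<sigma> A \<in> L)"

definition prop_fragment :: "fm set \<Rightarrow> fm set" where
  "prop_fragment L = {A \<in> L. propositional A}"

text \<open>\<open>provL P A\<close>: derivability (of quantifier-free formulas) from substitution
  instances of the propositional theorems P (propositional variables replaced by
  quantifier-free formulas) by modus ponens.\<close>
inductive provL :: "fm set \<Rightarrow> fm \<Rightarrow> bool" for P :: "fm set" where
  inst: "A \<in> P \<Longrightarrow> (\<forall>p. qfree (\<sigma> p 0)) \<Longrightarrow> provL P (psubst \<sigma> A)"
| mpL: "provL P (Impl A B) \<Longrightarrow> provL P A \<Longrightarrow> provL P B"

text \<open>\<open>exs n A\<close> = \<open>\<exists>x1 ... \<exists>xn. A\<close>; inside A, \<open>x_n\<close> is index 0, ..., \<open>x_1\<close> is index n-1,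
  and free variables of the whole formula are indices \<open>\<ge> n\<close>.\<close>
definition exs :: "nat \<Rightarrow> fm \<Rightarrow> fm" where
  "exs n A = (Exists ^^ n) A"

definition existential :: "fm \<Rightarrow> bool" where
  "existential A \<longleftrightarrow> (\<exists>n A'. qfree A' \<and> A = exs n A')"

definition inst_n :: "nat \<Rightarrow> fm \<Rightarrow> (nat \<Rightarrow> trm) \<Rightarrow> fm" where
  "inst_n n A' ts = substf (\<lambda>i. if i < n then ts i else Var (i - n)) A'"

fun Disjs :: "fm list \<Rightarrow> fm" where
  "Disjs [] = FF"
| "Disjs [A] = A"
| "Disjs (A # As) = Disj A (Disjs As)"

definition herbrand_existential :: "fm set \<Rightarrow> bool" where
  "herbrand_existential L \<longleftrightarrow>
     (\<forall>n A'. qfree A' \<longrightarrow> exs n A' \<in> L \<longrightarrow>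
        (\<exists>tss. tss \<noteq> [] \<and> provL (prop_fragment L) (Disjs (map (inst_n n A') tss))))"

inductive prenex :: "fm \<Rightarrow> bool" where
  "qfree A \<Longrightarrow> prenex A"
| "prenex A \<Longrightarrow> prenex (Forall A)"
| "prenex A \<Longrightarrow> prenex (Exists A)"

definition CD_instances :: "fm set" where
  "CD_instances = {Impl (Forall (Disj C (liftf B))) (Disj (Forall C) B) | C B. True}"

end

theory Submission
  imports Defs "HOL-Library.Countable"
begin

section \<open>Substitution calculus\<close>

abbreviation lft :: "trm \<Rightarrow> trm" where "lft t \<equiv> substt (\<lambda>k. Var (Suc k)) t"

definition cons_sub :: "trm \<Rightarrow> (nat \<Rightarrow> trm) \<Rightarrow> nat \<Rightarrow> trm" where
  "cons_sub t s i = (case i of 0 \<Rightarrow> t | Suc j \<Rightarrow> s j)"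

lemma cons_sub_simps[simp]: "cons_sub t s 0 = t" "cons_sub t s (Suc j) = s j"
  by (auto simp: cons_sub_def)

lemma inst1_cons: "inst1 A t = substf (cons_sub t Var) A"
  unfolding inst1_def cons_sub_def by simp

lemma substt_comp: "substt s (substt s' t) = substt (\<lambda>i. substt s (s' i)) t"
  by (induction t) auto

lemma substt_Var[simp]: "substt Var t = t"
  by (induction t) (auto simp: map_idI)

lemma shift_sub_Var[simp]: "shift_sub Var = Var"
  by (auto simp: shift_sub_def fun_eq_iff split: nat.split)

lemma substf_Var[simp]: "substf Var A = A"
  by (induction A) (auto simp: map_idI)

lemma shift_sub_0[simp]: "shift_sub s 0 = Var 0"
  and shift_sub_Suc[simp]: "shift_sub s (Suc j) = lft (s j)"
  by (auto simp: shift_sub_def)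

lemma shift_sub_comp:
  "shift_sub (\<lambda>i. substt s (s' i)) = (\<lambda>i. substt (shift_sub s) (shift_sub s' i))"
proof
  fix i show "shift_sub (\<lambda>i. substt s (s' i)) i = substt (shift_sub s) (shift_sub s' i)"
    by (cases i) (auto simp: substt_comp)
qed

lemma substf_comp: "substf s (substf s' A) = substf (\<lambda>i. substt s (s' i)) A"
  by (induction A arbitrary: s s') (auto simp: substt_comp shift_sub_comp)

fun fvt :: "trm \<Rightarrow> nat set" where
  "fvt (Var i) = {i}"
| "fvt (Fun f ts) = (\<Union>t\<in>set ts. fvt t)"

fun fvf :: "fm \<Rightarrow> nat set" where
  "fvf FF = {}"
| "fvf (Pr p ts) = (\<Union>t\<in>set ts. fvt t)"
| "fvf (Conj A B) = fvf A \<union> fvf B"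
| "fvf (Disj A B) = fvf A \<union> fvf B"
| "fvf (Impl A B) = fvf A \<union> fvf B"
| "fvf (Forall A) = {j. Suc j \<in> fvf A}"
| "fvf (Exists A) = {j. Suc j \<in> fvf A}"

lemma substt_cong: "(\<And>i. i \<in> fvt t \<Longrightarrow> s i = s' i) \<Longrightarrow> substt s t = substt s' t"
  by (induction t) auto

lemma substf_cong: "(\<And>i. i \<in> fvf A \<Longrightarrow> s i = s' i) \<Longrightarrow> substf s A = substf s' A"
proof (induction A arbitrary: s s')
  case FF then show ?case by simp
next
  case (Pr p ts)
  have "map (substt s) ts = map (substt s') ts"
  proof (rule map_cong[OF refl])
    fix t assume "t \<in> set ts"
    then show "substt s t = substt s' t" using Pr.prems by (intro substt_cong) auto
  qed
  then show ?case by simp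
next
  case (Conj A B)
  have "substf s A = substf s' A" by (rule Conj.IH(1)) (use Conj.prems in auto)
  moreover have "substf s B = substf s' B" by (rule Conj.IH(2)) (use Conj.prems in auto)
  ultimately show ?case by simp
next
  case (Disj A B)
  have "substf s A = substf s' A" by (rule Disj.IH(1)) (use Disj.prems in auto)
  moreover have "substf s B = substf s' B" by (rule Disj.IH(2)) (use Disj.prems in auto)
  ultimately show ?case by simp
next
  case (Impl A B)
  have "substf s A = substf s' A" by (rule Impl.IH(1)) (use Impl.prems in auto)
  moreover have "substf s B = substf s' B" by (rule Impl.IH(2)) (use Impl.prems in auto)
  ultimately show ?case by simp
next
  case (Forall A)
  have "substf (shift_sub s) A = substf (shift_sub s') A"
  proof (rule Forall.IH)
    fix i assume "i \<in> fvf A" then show "shift_sub s i = shift_sub s' i"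
      using Forall.prems by (cases i) auto
  qed
  then show ?case by simp
next
  case (Exists A)
  have "substf (shift_sub s) A = substf (shift_sub s') A"
  proof (rule Exists.IH)
    fix i assume "i \<in> fvf A" then show "shift_sub s i = shift_sub s' i"
      using Exists.prems by (cases i) auto
  qed
  then show ?case by simp
qed

lemma fvt_substt: "fvt (substt s t) = (\<Union>i\<in>fvt t. fvt (s i))"
  by (induction t) auto

lemma fvt_lft: "fvt (lft t) = Suc ` fvt t"
  by (auto simp: fvt_substt)

lemma fvf_substf: "fvf (substf s A) = (\<Union>i\<in>fvf A. fvt (s i))"
proof (induction A arbitrary: s)
  case (Pr p ts) then show ?case by (auto simp: fvt_substt)
next
  case (Forall A)
  show ?case
  proof (rule set_eqI, rule iffI)
    fix j assume "j \<in> fvf (substf s (Forall A))"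
    then obtain i where i: "i \<in> fvf A" "Suc j \<in> fvt (shift_sub s i)" using Forall.IH by auto
    then show "j \<in> (\<Union>i\<in>fvf (Forall A). fvt (s i))"
      by (cases i) (auto simp: fvt_lft)
  next
    fix j assume "j \<in> (\<Union>i\<in>fvf (Forall A). fvt (s i))"
    then obtain i where "Suc i \<in> fvf A" "j \<in> fvt (s i)" by auto
    then show "j \<in> fvf (substf s (Forall A))" using Forall.IH
      by (auto simp: fvt_lft intro!: bexI[of _ "Suc i"])
  qed
next
  case (Exists A)
  show ?case
  proof (rule set_eqI, rule iffI)
    fix j assume "j \<in> fvf (substf s (Exists A))"
    then obtain i where i: "i \<in> fvf A" "Suc j \<in> fvt (shift_sub s i)" using Exists.IH by auto
    then show "j \<in> (\<Union>i\<in>fvf (Exists A). fvt (s i))"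
      by (cases i) (auto simp: fvt_lft)
  next
    fix j assume "j \<in> (\<Union>i\<in>fvf (Exists A). fvt (s i))"
    then obtain i where "Suc i \<in> fvf A" "j \<in> fvt (s i)" by auto
    then show "j \<in> fvf (substf s (Exists A))" using Exists.IH
      by (auto simp: fvt_lft intro!: bexI[of _ "Suc i"])
  qed
qed auto

lemma finite_fvt[simp]: "finite (fvt t)"
  by (induction t) auto

lemma finite_fvf[simp]: "finite (fvf A)"
proof (induction A)
  case (Forall A)
  have "{j. Suc j \<in> fvf A} = Suc -` fvf A" by auto
  then show ?case using Forall.IH by (simp add: finite_vimageI inj_def)
next
  case (Exists A)
  have "{j. Suc j \<in> fvf A} = Suc -` fvf A" by auto
  then show ?case using Exists.IH by (simp add: finite_vimageI inj_def)
qed auto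

lemma cons_shift: "(\<lambda>i. substt (cons_sub t Var) (shift_sub s i)) = cons_sub t s"
proof
  fix i show "substt (cons_sub t Var) (shift_sub s i) = cons_sub t s i"
  proof (cases i)
    case (Suc j)
    have "substt (cons_sub t Var) (lft (s j)) = substt (\<lambda>k. cons_sub t Var (Suc k)) (s j)"
      by (simp add: substt_comp)
    also have "\<dots> = s j" by simp
    finally show ?thesis using Suc by simp
  qed simp
qed

lemma inst1_shift: "inst1 (substf (shift_sub s) A) t = substf (cons_sub t s) A"
  unfolding inst1_cons substf_comp cons_shift ..

lemma fvf_inst1: "fvf (inst1 A t) \<subseteq> fvf (Forall A) \<union> fvt t"
proof
  fix x assume "x \<in> fvf (inst1 A t)"
  then obtain i where i: "i \<in> fvf A" "x \<in> fvt (cons_sub t Var i)"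
    unfolding inst1_cons fvf_substf by auto
  then show "x \<in> fvf (Forall A) \<union> fvt t" by (cases i) auto
qed

fun quant :: "bool list \<Rightarrow> fm \<Rightarrow> fm" where
  "quant [] B = B"
| "quant (q # qs) B = (if q then Forall (quant qs B) else Exists (quant qs B))"

lemma exs_quant: "exs n A = quant (replicate n False) A"
proof (induction n)
  case 0 then show ?case by (simp add: exs_def)
next
  case (Suc n)
  have "exs (Suc n) A = Exists (exs n A)" by (simp add: exs_def)
  then show ?case using Suc.IH by simp
qed

lemma substf_quant: "substf s (quant qs B) = quant qs (substf ((shift_sub ^^ length qs) s) B)"
  by (induction qs arbitrary: s) (auto simp: funpow_Suc_right simp del: funpow.simps)

lemma shift_pow: "(shift_sub ^^ n) s i = (if i < n then Var i else substt (\<lambda>k. Var (k + n)) (s (i - n)))"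
proof (induction n arbitrary: i)
  case 0 then show ?case by simp
next
  case (Suc n)
  show ?case
  proof (cases i)
    case 0 then show ?thesis by simp
  next
    case (Suc j)
    have e: "(shift_sub ^^ Suc n) s (Suc j) = lft ((shift_sub ^^ n) s j)" by simp
    show ?thesis
    proof (cases "j < n")
      case True then show ?thesis using Suc.IH[of j] e \<open>i = Suc j\<close> by simp
    next
      case False
      have "lft (substt (\<lambda>k. Var (k + n)) (s (j - n))) = substt (\<lambda>k. Var (k + Suc n)) (s (j - n))"
        by (simp add: substt_comp)
      then show ?thesis using False Suc.IH[of j] e \<open>i = Suc j\<close> by simp
    qed
  qed
qed

lemma inst_n_step:
  "inst_n n (substf ((shift_sub ^^ n) (cons_sub (ts n) Var)) B) ts = inst_n (Suc n) B ts"
  unfolding inst_n_def substf_comp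
proof (rule substf_cong)
  fix i
  show "substt (\<lambda>i. if i < n then ts i else Var (i - n)) ((shift_sub ^^ n) (cons_sub (ts n) Var) i) =
         (if i < Suc n then ts i else Var (i - Suc n))"
  proof (cases "i < n")
    case True then show ?thesis by (simp add: shift_pow)
  next
    case False
    show ?thesis
    proof (cases "i = n")
      case True then show ?thesis by (simp add: shift_pow substt_comp)
    next
      case False
      with \<open>\<not> i < n\<close> obtain j where "i = Suc (n + j)" by (metis add_Suc_right less_imp_Suc_add linorder_neqE_nat)
      then show ?thesis by (simp add: shift_pow)
    qed
  qed
qed

section \<open>Intuitionistic derivations\<close>

abbreviation IQ :: "fm \<Rightarrow> bool" where "IQ A \<equiv> deriv {} A"

lemma d_refl: "IQ (Impl A A)"
proof -
  have 1: "IQ (Impl (Impl A (Impl A A)) (Impl (Impl A (Impl (Impl A A) A)) (Impl A A)))" by (rule deriv.ax_S)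
  have 2: "IQ (Impl A (Impl A A))" by (rule deriv.ax_K)
  have 3: "IQ (Impl A (Impl (Impl A A) A))" by (rule deriv.ax_K)
  show ?thesis by (rule deriv.mp[OF deriv.mp[OF 1 2] 3])
qed

lemma d_trans: "IQ (Impl A B) \<Longrightarrow> IQ (Impl B C) \<Longrightarrow> IQ (Impl A C)"
proof -
  assume ab: "IQ (Impl A B)" and bc: "IQ (Impl B C)"
  have "IQ (Impl A (Impl B C))" by (rule deriv.mp[OF deriv.ax_K bc])
  then show ?thesis by (rule deriv.mp[OF deriv.mp[OF deriv.ax_S ab]])
qed

lemma d_disjE: "IQ (Impl A C) \<Longrightarrow> IQ (Impl B C) \<Longrightarrow> IQ (Impl (Disj A B) C)"
  by (rule deriv.mp[OF deriv.mp[OF deriv.ax_DisjE]])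

lemma Disjs_in: "x \<in> set L \<Longrightarrow> IQ (Impl x (Disjs L))"
proof (induction L rule: Disjs.induct)
  case (2 A) then show ?case by (simp add: d_refl)
next
  case (3 A B L)
  show ?case
  proof (cases "x = A")
    case True then show ?thesis by (simp add: deriv.ax_DisjI1)
  next
    case False
    then have "IQ (Impl x (Disjs (B # L)))" using 3 by simp
    then show ?thesis using 3(2) by (simp add: d_trans[OF _ deriv.ax_DisjI2])
  qed
qed simp

lemma Disjs_elim: "(\<And>x. x \<in> set L \<Longrightarrow> IQ (Impl x C)) \<Longrightarrow> IQ (Impl (Disjs L) C)"
proof (induction L rule: Disjs.induct)
  case 1 then show ?case by (simp add: deriv.ax_FF)
next
  case (2 A) then show ?case by simp
next
  case (3 A B L)
  then show ?case by (simp add: d_disjE)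
qed

definition TT :: fm where "TT = Impl FF FF"

lemma liftf_TT[simp]: "liftf TT = TT" by (simp add: TT_def liftf_def)
lemma IQ_TT: "IQ TT" by (simp add: TT_def deriv.ax_FF)

lemma inst_n_0[simp]: "inst_n 0 B ts = B"
  unfolding inst_n_def by simp

lemma exists_inst: "IQ (Impl (inst_n n B ts) (quant (replicate n False) B))"
proof (induction n arbitrary: B)
  case 0 then show ?case by (simp add: d_refl)
next
  case (Suc n)
  let ?B' = "substf ((shift_sub ^^ n) (cons_sub (ts n) Var)) B"
  have e: "inst1 (quant (replicate n False) B) (ts n) = quant (replicate n False) ?B'"
    by (simp add: inst1_cons substf_quant)
  have "IQ (Impl (inst_n n ?B' ts) (quant (replicate n False) ?B'))" by (rule Suc.IH)
  then have "IQ (Impl (inst_n (Suc n) B ts) (inst1 (quant (replicate n False) B) (ts n)))"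
    by (simp add: e inst_n_step)
  then show ?case by (simp add: d_trans[OF _ deriv.ax_ExI])
qed

locale ilog = fixes L :: "fm set" assumes im: "intermediate L"
begin

lemma iqc: "IQ A \<Longrightarrow> A \<in> L"
  using im unfolding intermediate_def IQC_def by auto

lemma mpL: "Impl A B \<in> L \<Longrightarrow> A \<in> L \<Longrightarrow> B \<in> L"
  using im unfolding intermediate_def by blast

lemma allR: "Impl (liftf B) A \<in> L \<Longrightarrow> Impl B (Forall A) \<in> L"
  using im unfolding intermediate_def by blast

lemma psub: "A \<in> L \<Longrightarrow> psubst \<sigma> A \<in> L"
  using im unfolding intermediate_def by blast

lemma impL: "IQ (Impl A B) \<Longrightarrow> A \<in> L \<Longrightarrow> B \<in> L"
  using iqc mpL by blast

lemma gen: "A \<in> L \<Longrightarrow> Forall A \<in> L"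
proof -
  assume "A \<in> L"
  then have "Impl (liftf TT) A \<in> L" using impL[OF deriv.ax_K[where A=A and B=TT]] by simp
  then have "Impl TT (Forall A) \<in> L" using allR by simp
  then show ?thesis using mpL iqc IQ_TT by blast
qed

lemma instL: "Forall A \<in> L \<Longrightarrow> inst1 A t \<in> L"
  using impL[OF deriv.ax_AllE] .

lemma gen_n: "A \<in> L \<Longrightarrow> quant (replicate n True) A \<in> L"
  by (induction n) (auto intro: gen)

lemma forall_n: "quant (replicate n True) B \<in> L \<Longrightarrow> inst_n n B ts \<in> L"
proof (induction n arbitrary: B)
  case 0 then show ?case by simp
next
  case (Suc n)
  let ?B' = "substf ((shift_sub ^^ n) (cons_sub (ts n) Var)) B"
  have e: "inst1 (quant (replicate n True) B) (ts n) = quant (replicate n True) ?B'"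
    by (simp add: inst1_cons substf_quant)
  have "inst1 (quant (replicate n True) B) (ts n) \<in> L"
    using Suc.prems by (intro instL) simp
  then have "inst_n n ?B' ts \<in> L" using Suc.IH e by simp
  then show ?case by (simp add: inst_n_step)
qed

lemma subst_closed: "A \<in> L \<Longrightarrow> substf s A \<in> L"
proof -
  assume A: "A \<in> L"
  obtain N where N: "\<forall>i\<in>fvf A. i < N"
    using finite_fvf[of A] by (meson finite_nat_set_iff_bounded)
  have "inst_n N A s \<in> L" using A by (intro forall_n gen_n)
  moreover have "inst_n N A s = substf s A"
    unfolding inst_n_def using N by (intro substf_cong) auto
  ultimately show ?thesis by simp
qed

lemma provL_in: "provL (prop_fragment L) A \<Longrightarrow> A \<in> L"
proof (induction rule: provL.induct)
  case (inst A \<sigma>) then show ?case by (auto simp: prop_fragment_def intro: psub)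
next
  case (mpL A B) then show ?case using ilog.mpL ilog_axioms by blast
qed

end

lemma ilogI: "intermediate L \<Longrightarrow> ilog L" by (simp add: ilog_def)

lemma part1:
  assumes "intermediate QL1" "QL1 \<subseteq> QL2" "prop_fragment QL1 = prop_fragment QL2"
    "herbrand_existential QL2" "existential A"
  shows "A \<in> QL1 \<longleftrightarrow> A \<in> QL2"
proof
  assume "A \<in> QL1" then show "A \<in> QL2" using assms(2) by auto
next
  assume A2: "A \<in> QL2"
  from assms(5) obtain n A' where q: "qfree A'" and A: "A = exs n A'" by (auto simp: existential_def)
  then obtain tss where "provL (prop_fragment QL2) (Disjs (map (inst_n n A') tss))"
    using assms(4) A2 unfolding herbrand_existential_def by blast
  then have D: "Disjs (map (inst_n n A') tss) \<in> QL1"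
    using ilog.provL_in[OF ilogI[OF assms(1)]] assms(3) by simp
  have "IQ (Impl (Disjs (map (inst_n n A') tss)) A)"
  proof (rule Disjs_elim)
    fix x assume "x \<in> set (map (inst_n n A') tss)"
    then obtain ts where "x = inst_n n A' ts" by auto
    then show "IQ (Impl x A)" using exists_inst[of n A' ts] by (simp add: A exs_quant)
  qed
  then show "A \<in> QL1" using ilog.impL[OF ilogI[OF assms(1)]] D by blast
qed

lemma lsub_cons: "cons_sub (Var 0) (\<lambda>k. Var (Suc k)) = Var"
proof
  fix i show "cons_sub (Var 0) (\<lambda>k. Var (Suc k)) i = Var i" by (cases i) auto
qed

lemma ex_mono: "IQ (Impl X Y) \<Longrightarrow> IQ (Impl (Exists X) (Exists Y))"
proof -
  assume xy: "IQ (Impl X Y)"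
  let ?Y' = "substf (shift_sub (\<lambda>k. Var (Suc k))) Y"
  have "inst1 ?Y' (Var 0) = Y" by (simp add: inst1_shift lsub_cons)
  moreover have "IQ (Impl (inst1 ?Y' (Var 0)) (Exists ?Y'))" by (rule deriv.ax_ExI)
  moreover have "liftf (Exists Y) = Exists ?Y'" by (simp add: liftf_def)
  ultimately have "IQ (Impl Y (liftf (Exists Y)))" by simp
  then have "IQ (Impl X (liftf (Exists Y)))" using d_trans xy by blast
  then show ?thesis by (rule deriv.ex_rule)
qed

fun nE :: "bool list \<Rightarrow> nat" where
  "nE [] = 0"
| "nE (q # qs) = (if q then nE qs else Suc (nE qs))"

fun skt :: "nat \<Rightarrow> bool list \<Rightarrow> (nat \<Rightarrow> trm) \<Rightarrow> nat \<Rightarrow> nat \<Rightarrow> nat \<Rightarrow> trm" where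
  "skt NF [] \<sigma> c p = \<sigma>"
| "skt NF (q # qs) \<sigma> c p = (if q then skt NF qs (cons_sub (Fun (NF + p) (map Var (rev [0..<c]))) \<sigma>) c (Suc p)
      else skt NF qs (shift_sub \<sigma>) (Suc c) (Suc p))"

lemma sk_imp: "IQ (Impl (substf \<sigma> (quant qs B)) (quant (replicate (nE qs) False) (substf (skt NF qs \<sigma> c p) B)))"
proof (induction qs arbitrary: \<sigma> c p)
  case Nil then show ?case by (simp add: d_refl)
next
  case (Cons q qs)
  show ?case
  proof (cases q)
    case True
    let ?t = "Fun (NF + p) (map Var (rev [0..<c]))"
    have "IQ (Impl (Forall (substf (shift_sub \<sigma>) (quant qs B))) (inst1 (substf (shift_sub \<sigma>) (quant qs B)) ?t))"
      by (rule deriv.ax_AllE)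
    then have 1: "IQ (Impl (substf \<sigma> (quant (q # qs) B)) (substf (cons_sub ?t \<sigma>) (quant qs B)))"
      using True by (simp add: inst1_shift)
    have 2: "IQ (Impl (substf (cons_sub ?t \<sigma>) (quant qs B))
       (quant (replicate (nE qs) False) (substf (skt NF qs (cons_sub ?t \<sigma>) c (Suc p)) B)))"
      by (rule Cons.IH)
    show ?thesis using d_trans[OF 1 2] True by simp
  next
    case False
    have "IQ (Impl (substf (shift_sub \<sigma>) (quant qs B))
       (quant (replicate (nE qs) False) (substf (skt NF qs (shift_sub \<sigma>) (Suc c) (Suc p)) B)))"
      by (rule Cons.IH)
    then have "IQ (Impl (Exists (substf (shift_sub \<sigma>) (quant qs B)))
       (Exists (quant (replicate (nE qs) False) (substf (skt NF qs (shift_sub \<sigma>) (Suc c) (Suc p)) B))))"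
      by (rule ex_mono)
    then show ?thesis using False by simp
  qed
qed

context ilog
begin

lemma cdR:
  assumes cd: "CD_instances \<subseteq> L" and h: "Disj B (liftf C) \<in> L"
  shows "Disj (Forall B) C \<in> L"
proof -
  have "Impl (liftf TT) (Disj B (liftf C)) \<in> L" using impL[OF deriv.ax_K[where A="Disj B (liftf C)" and B=TT] h] by simp
  then have "Impl TT (Forall (Disj B (liftf C))) \<in> L" using allR by simp
  then have "Forall (Disj B (liftf C)) \<in> L" using mpL iqc IQ_TT by blast
  moreover have "Impl (Forall (Disj B (liftf C))) (Disj (Forall B) C) \<in> L"
    using cd unfolding CD_instances_def by blast
  ultimately show ?thesis using mpL by blast
qed

lemma allR_var:
  assumes cd: "CD_instances \<subseteq> L" and h: "Disj (inst1 \<Phi> (Var y)) C \<in> L"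
    and y1: "y \<notin> fvf (Forall \<Phi>)" and y2: "y \<notin> fvf C"
  shows "Disj (Forall \<Phi>) C \<in> L"
proof -
  define s where "s = (\<lambda>j. if j = y then Var 0 else Var (Suc j))"
  have "substf s (Disj (inst1 \<Phi> (Var y)) C) \<in> L" using h by (rule subst_closed)
  moreover have "substf s C = liftf C"
    unfolding liftf_def using y2 by (intro substf_cong) (auto simp: s_def)
  moreover have "substf s (inst1 \<Phi> (Var y)) = \<Phi>"
  proof -
    have "substf s (inst1 \<Phi> (Var y)) = substf (\<lambda>i. substt s (cons_sub (Var y) Var i)) \<Phi>"
      by (simp add: inst1_cons substf_comp)
    also have "\<dots> = substf Var \<Phi>"
    proof (rule substf_cong)
      fix i assume i: "i \<in> fvf \<Phi>"
      show "substt s (cons_sub (Var y) Var i) = Var i"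
      proof (cases i)
        case 0 then show ?thesis by (simp add: s_def)
      next
        case (Suc j)
        then have "j \<noteq> y" using y1 i by auto
        then show ?thesis using Suc by (simp add: s_def)
      qed
    qed
    finally show ?thesis by simp
  qed
  ultimately have "Disj \<Phi> (liftf C) \<in> L" by simp
  then show ?thesis by (rule cdR[OF cd])
qed

end

fun unq :: "fm \<Rightarrow> fm" where
  "unq (Forall A) = A"
| "unq (Exists A) = A"
| "unq A = A"

fun fmp :: "(trm \<Rightarrow> trm) \<Rightarrow> fm \<Rightarrow> trm list \<Rightarrow> fm" where
  "fmp g \<Phi> [] = \<Phi>"
| "fmp g \<Phi> (w # ws) = fmp g (inst1 (unq \<Phi>) (g w)) ws"

lemma fmp_snoc: "fmp g \<Phi> (ws @ [w]) = inst1 (unq (fmp g \<Phi> ws)) (g w)"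
  by (induction ws arbitrary: \<Phi>) auto

fun psub :: "(trm \<Rightarrow> trm) \<Rightarrow> bool list \<Rightarrow> (nat \<Rightarrow> trm) \<Rightarrow> trm list \<Rightarrow> nat \<Rightarrow> trm" where
  "psub g (q # qs) \<sigma> (w # ws) = psub g qs (cons_sub (g w) \<sigma>) ws"
| "psub g _ \<sigma> _ = \<sigma>"

lemma unq_substf_quant: "unq (substf \<sigma> (quant (q # qs) B)) = substf (shift_sub \<sigma>) (quant qs B)"
  by (cases q) auto

lemma fmp_quant:
  "length ws \<le> length qs \<Longrightarrow>
   fmp g (substf \<sigma> (quant qs B)) ws = substf (psub g qs \<sigma> ws) (quant (drop (length ws) qs) B)"
proof (induction qs arbitrary: \<sigma> ws)
  case Nil then show ?case by simp
next
  case (Cons q qs)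
  show ?case
  proof (cases ws)
    case Nil then show ?thesis by simp
  next
    case (Cons w ws')
    have "fmp g (substf \<sigma> (quant (q # qs) B)) ws = fmp g (substf (cons_sub (g w) \<sigma>) (quant qs B)) ws'"
      using Cons by (simp add: unq_substf_quant inst1_shift)
    also have "\<dots> = substf (psub g qs (cons_sub (g w) \<sigma>) ws') (quant (drop (length ws') qs) B)"
      using Cons.IH Cons.prems Cons by simp
    finally show ?thesis using Cons by simp
  qed
qed

lemma fvf_exists_forall: "fvf (substf \<sigma> (Exists X)) = fvf (substf \<sigma> (Forall X))"
  by simp

lemma fvf_fmp:
  "length ws \<le> length qs \<Longrightarrow>
   fvf (fmp g (substf \<sigma> (quant qs B)) ws) \<subseteq> fvf (substf \<sigma> (quant qs B)) \<union> (\<Union>w\<in>set ws. fvt (g w))"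
proof (induction qs arbitrary: \<sigma> ws)
  case Nil then show ?case by simp
next
  case (Cons q qs)
  show ?case
  proof (cases ws)
    case Nil then show ?thesis by simp
  next
    case (Cons w ws')
    have e: "fmp g (substf \<sigma> (quant (q # qs) B)) ws = fmp g (substf (cons_sub (g w) \<sigma>) (quant qs B)) ws'"
      using Cons by (simp add: unq_substf_quant inst1_shift)
    have "fvf (fmp g (substf (cons_sub (g w) \<sigma>) (quant qs B)) ws') \<subseteq>
       fvf (substf (cons_sub (g w) \<sigma>) (quant qs B)) \<union> (\<Union>w\<in>set ws'. fvt (g w))"
      using Cons.IH Cons.prems Cons by simp
    moreover have "fvf (substf (cons_sub (g w) \<sigma>) (quant qs B)) \<subseteq> fvf (substf \<sigma> (quant (q # qs) B)) \<union> fvt (g w)"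
    proof -
      have "substf (cons_sub (g w) \<sigma>) (quant qs B) = inst1 (substf (shift_sub \<sigma>) (quant qs B)) (g w)"
        by (simp add: inst1_shift)
      then have "fvf (substf (cons_sub (g w) \<sigma>) (quant qs B)) \<subseteq> fvf (Forall (substf (shift_sub \<sigma>) (quant qs B))) \<union> fvt (g w)"
        using fvf_inst1 by metis
      moreover have "fvf (Forall (substf (shift_sub \<sigma>) (quant qs B))) = fvf (substf \<sigma> (quant (q # qs) B))"
        by (cases q) auto
      ultimately show ?thesis by simp
    qed
    moreover have "(\<Union>w\<in>set ws. fvt (g w)) = fvt (g w) \<union> (\<Union>w\<in>set ws'. fvt (g w))"
      using Cons by simp
    ultimately show ?thesis unfolding e by blast
  qed
qed

section \<open>Skolem term replacement\<close>

instance trm :: countable by countable_datatype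

fun fsymt :: "trm \<Rightarrow> nat set" where
  "fsymt (Var j) = {}"
| "fsymt (Fun f ts) = insert f (\<Union>t\<in>set ts. fsymt t)"

fun fsymf :: "fm \<Rightarrow> nat set" where
  "fsymf FF = {}"
| "fsymf (Pr p ts) = (\<Union>t\<in>set ts. fsymt t)"
| "fsymf (Conj A B) = fsymf A \<union> fsymf B"
| "fsymf (Disj A B) = fsymf A \<union> fsymf B"
| "fsymf (Impl A B) = fsymf A \<union> fsymf B"
| "fsymf (Forall A) = fsymf A"
| "fsymf (Exists A) = fsymf A"

lemma finite_fsymt: "finite (fsymt t)" by (induction t) auto
lemma finite_fsymf: "finite (fsymf A)" by (induction A) (auto simp: finite_fsymt)

fun gt :: "nat \<Rightarrow> nat \<Rightarrow> trm \<Rightarrow> trm" where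
  "gt NF N (Var j) = Var j"
| "gt NF N (Fun f ts) = (if NF \<le> f then Var (N + to_nat (Fun f ts)) else Fun f (map (gt NF N) ts))"

lemma gt_substt: "(\<forall>f\<in>fsymt t. f < NF) \<Longrightarrow> gt NF N (substt s t) = substt (\<lambda>i. gt NF N (s i)) t"
  by (induction t) auto

fun gm :: "(trm \<Rightarrow> trm) \<Rightarrow> fm \<Rightarrow> fm" where
  "gm g FF = FF"
| "gm g (Pr p ts) = Pr p (map g ts)"
| "gm g (Conj A B) = Conj (gm g A) (gm g B)"
| "gm g (Disj A B) = Disj (gm g A) (gm g B)"
| "gm g (Impl A B) = Impl (gm g A) (gm g B)"
| "gm g (Forall A) = Forall (gm g A)"
| "gm g (Exists A) = Exists (gm g A)"

lemma gm_substf: "qfree B \<Longrightarrow> (\<forall>f\<in>fsymf B. f < NF) \<Longrightarrow>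
   gm (gt NF N) (substf s B) = substf (\<lambda>i. gt NF N (s i)) B"
  by (induction B) (auto simp: gt_substt)

lemma qfree_gm[simp]: "qfree (gm g A) = qfree A"
  by (induction A) auto

lemma gm_psubst: "propositional A \<Longrightarrow> gm g (psubst_d \<sigma> 0 A) = psubst_d (\<lambda>p n. gm g (\<sigma> p n)) 0 A"
proof (induction A)
  case (Pr p ts)
  then have "ts = []" by simp
  have v: "(\<lambda>i. if i < length ts then ts ! i else Var (i - length ts + 0)) = Var"
    using \<open>ts = []\<close> by auto
  show ?case unfolding psubst_d.simps v by simp
qed auto

lemma provL_gm: "provL P X \<Longrightarrow> (\<forall>A\<in>P. propositional A) \<Longrightarrow> provL P (gm g X)"
proof (induction rule: provL.induct)
  case (inst A \<sigma>)
  then have "gm g (psubst \<sigma> A) = psubst (\<lambda>p n. gm g (\<sigma> p n)) A"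
    unfolding psubst_def by (intro gm_psubst) auto
  moreover have "provL P (psubst (\<lambda>p n. gm g (\<sigma> p n)) A)"
    using inst by (intro provL.inst) auto
  ultimately show ?case by simp
next
  case (mpL A B)
  then show ?case using provL.mpL[of P "gm g A" "gm g B"] by simp
qed

lemma gm_Disjs: "gm g (Disjs L) = Disjs (map (gm g) L)"
  by (induction L rule: Disjs.induct) auto

fun subt :: "trm \<Rightarrow> trm set" where
  "subt (Var j) = {Var j}"
| "subt (Fun f ts) = insert (Fun f ts) (\<Union>t\<in>set ts. subt t)"

fun tsize :: "trm \<Rightarrow> nat" where
  "tsize (Var j) = 1"
| "tsize (Fun f ts) = Suc (sum_list (map tsize ts))"

lemma tsize_mem: "t \<in> set ts \<Longrightarrow> tsize t < tsize (Fun f ts)"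
proof -
  assume "t \<in> set ts"
  then have "tsize t \<in> set (map tsize ts)" by simp
  then have "tsize t \<le> sum_list (map tsize ts)" by (rule member_le_sum_list) simp
  then show ?thesis by simp
qed

lemma subt_size: "u \<in> subt w \<Longrightarrow> tsize u \<le> tsize w"
proof (induction w)
  case (Var j) then show ?case by simp
next
  case (Fun f ts)
  show ?case
  proof (cases "u = Fun f ts")
    case False
    then obtain t where t: "t \<in> set ts" "u \<in> subt t" using Fun.prems by auto
    then have "tsize u \<le> tsize t" using Fun.IH by blast
    then show ?thesis using tsize_mem[OF t(1), of f] by simp
  qed simp
qed

lemma fvt_gt: "y \<in> fvt (gt NF N w) \<Longrightarrow> y \<in> fvt w \<or> (\<exists>u\<in>subt w. y = N + to_nat u)"
proof (induction w)
  case (Var j) then show ?case by simp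
next
  case (Fun f ts)
  show ?case
  proof (cases "NF \<le> f")
    case True then show ?thesis using Fun.prems by auto
  next
    case False
    then obtain t where t: "t \<in> set ts" "y \<in> fvt (gt NF N t)" using Fun.prems by auto
    then have "y \<in> fvt t \<or> (\<exists>u\<in>subt t. y = N + to_nat u)" using Fun.IH by blast
    then show ?thesis using t(1) by auto
  qed
qed

lemma nE_append: "nE (xs @ ys) = nE xs + nE ys"
  by (induction xs) auto

definition cnt :: "bool list \<Rightarrow> nat \<Rightarrow> nat" where "cnt qs i = nE (take i qs)"

lemma cnt_Suc: "i < length qs \<Longrightarrow> cnt qs (Suc i) = (if qs ! i then cnt qs i else Suc (cnt qs i))"
  unfolding cnt_def by (simp add: take_Suc_conv_app_nth nE_append)

lemma cnt_mono: "i \<le> j \<Longrightarrow> cnt qs i \<le> cnt qs j"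
proof -
  assume "i \<le> j"
  then have "take j qs = take i qs @ take (j - i) (drop i qs)"
    by (metis le_add_diff_inverse take_add)
  then show ?thesis unfolding cnt_def by (simp add: nE_append)
qed

lemma cnt_lt: "i < j \<Longrightarrow> j \<le> length qs \<Longrightarrow> \<not> qs ! i \<Longrightarrow> cnt qs i < cnt qs j"
proof -
  assume a: "i < j" "j \<le> length qs" "\<not> qs ! i"
  then have "cnt qs (Suc i) = Suc (cnt qs i)" by (simp add: cnt_Suc)
  moreover have "cnt qs (Suc i) \<le> cnt qs j" using a by (intro cnt_mono) simp
  ultimately show ?thesis by simp
qed

lemma cnt_len: "cnt qs (length qs) = nE qs" by (simp add: cnt_def)

definition hp :: "nat \<Rightarrow> bool list \<Rightarrow> trm list \<Rightarrow> nat \<Rightarrow> nat \<Rightarrow> trm list" where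
  "hp NF qs Es c p = map (\<lambda>i. if qs ! i then Fun (NF + (p + i)) (take (c + cnt qs i) Es) else Es ! (c + cnt qs i))
      [0..<length qs]"

lemma hp_Nil[simp]: "hp NF [] Es c p = []" by (simp add: hp_def)

lemma hp_Cons: "hp NF (q # qs) Es c p = (if q then Fun (NF + p) (take c Es) # hp NF qs Es c (Suc p)
     else Es ! c # hp NF qs Es (Suc c) (Suc p))"
  unfolding hp_def by (simp only: length_Cons map_upt_Suc) (simp add: cnt_def)

definition ev :: "trm list \<Rightarrow> nat \<Rightarrow> nat \<Rightarrow> trm" where
  "ev Es c i = (if i < c then Es ! (c - 1 - i) else Var (i - c))"

lemma rev_take: "c \<le> length Es \<Longrightarrow> map (\<lambda>i. Es ! (c - 1 - i)) (rev [0..<c]) = take c Es"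
proof (rule nth_equalityI)
  assume "c \<le> length Es"
  then show "length (map (\<lambda>i. Es ! (c - 1 - i)) (rev [0..<c])) = length (take c Es)" by simp
  fix k assume "k < length (map (\<lambda>i. Es ! (c - 1 - i)) (rev [0..<c]))"
  then have k: "k < c" by simp
  then have "rev [0..<c] ! k = c - Suc k" by (simp add: rev_nth)
  then show "map (\<lambda>i. Es ! (c - 1 - i)) (rev [0..<c]) ! k = take c Es ! k" using k by simp
qed

lemma ev_Suc: "(\<lambda>k. ev Es (Suc c) (Suc k)) = ev Es c"
  by (auto simp: ev_def fun_eq_iff)

lemma corr:
  "c + nE qs = length Es \<Longrightarrow> (\<And>i. \<sigma>' i = g (substt (ev Es c) (\<sigma> i))) \<Longrightarrow>
   psub g qs \<sigma>' (hp NF qs Es c p) = (\<lambda>i. g (substt (ev Es (length Es)) (skt NF qs \<sigma> c p i)))"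
proof (induction qs arbitrary: \<sigma> \<sigma>' c p)
  case Nil
  then show ?case by (auto simp: fun_eq_iff)
next
  case (Cons q qs)
  show ?case
  proof (cases q)
    case True
    let ?SK = "Fun (NF + p) (map Var (rev [0..<c]))"
    have cl: "c \<le> length Es" using Cons.prems(1) by auto
    have "map (ev Es c) (rev [0..<c]) = map (\<lambda>i. Es ! (c - 1 - i)) (rev [0..<c])"
      by (auto simp: ev_def)
    then have m: "map (ev Es c) (rev [0..<c]) = take c Es"
      using rev_take[OF cl] by (rule trans)
    have sk: "substt (ev Es c) ?SK = Fun (NF + p) (take c Es)"
      using m by (simp add: comp_def)
    have "psub g qs (cons_sub (g (Fun (NF + p) (take c Es))) \<sigma>') (hp NF qs Es c (Suc p)) =
        (\<lambda>i. g (substt (ev Es (length Es)) (skt NF qs (cons_sub ?SK \<sigma>) c (Suc p) i)))"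
    proof (rule Cons.IH)
      show "c + nE qs = length Es" using Cons.prems(1) True by simp
      fix i show "cons_sub (g (Fun (NF + p) (take c Es))) \<sigma>' i = g (substt (ev Es c) (cons_sub ?SK \<sigma> i))"
        using Cons.prems(2) sk by (cases i) auto
    qed
    then show ?thesis using True by (simp add: hp_Cons)
  next
    case False
    have "psub g qs (cons_sub (g (Es ! c)) \<sigma>') (hp NF qs Es (Suc c) (Suc p)) =
        (\<lambda>i. g (substt (ev Es (length Es)) (skt NF qs (shift_sub \<sigma>) (Suc c) (Suc p) i)))"
    proof (rule Cons.IH)
      show "Suc c + nE qs = length Es" using Cons.prems(1) False by simp
      fix i show "cons_sub (g (Es ! c)) \<sigma>' i = g (substt (ev Es (Suc c)) (shift_sub \<sigma> i))"
      proof (cases i)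
        case 0 then show ?thesis by (simp add: ev_def)
      next
        case (Suc j)
        have "substt (ev Es (Suc c)) (lft (\<sigma> j)) = substt (\<lambda>k. ev Es (Suc c) (Suc k)) (\<sigma> j)"
          by (simp add: substt_comp)
        then show ?thesis using Suc Cons.prems(2) by (simp add: ev_Suc)
      qed
    qed
    then show ?thesis using False by (simp add: hp_Cons)
  qed
qed

section \<open>The combinatorial core\<close>

lemma fvf_Disjs: "fvf (Disjs R) \<subseteq> (\<Union>x\<in>set R. fvf x)"
  by (induction R rule: Disjs.induct) auto

lemma in_set_take_nth: "x \<in> set (take k xs) \<Longrightarrow> \<exists>i<k. i < length xs \<and> x = xs ! i"
  by (auto simp: in_set_conv_nth)

lemma sum_take_mono: "a \<le> b \<Longrightarrow> sum_list (map f (take a xs)) \<le> sum_list (map (f :: _ \<Rightarrow> nat) (take b xs))"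
proof -
  assume "a \<le> b"
  then have "take b xs = take a xs @ take (b - a) (drop a xs)"
    by (metis le_add_diff_inverse take_add)
  then show ?thesis by simp
qed

locale core = ilog +
  fixes qs :: "bool list" and B :: fm and NF N :: nat and Ess :: "trm list list"
  assumes cd: "CD_instances \<subseteq> L"
    and Elen: "\<forall>Es\<in>set Ess. length Es = nE qs"
    and NA: "\<forall>i\<in>fvf (quant qs B). i < N"
    and NE: "\<forall>Es\<in>set Ess. \<forall>e\<in>set Es. \<forall>i\<in>fvt e. i < N"
begin

abbreviation "AA \<equiv> quant qs B"
abbreviation "mm \<equiv> length qs"
abbreviation "MM \<equiv> length Ess"
abbreviation "gg \<equiv> gt NF N"

definition pth :: "nat \<Rightarrow> trm list" where "pth j = hp NF qs (Ess ! j) 0 0"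

definition Fk :: "(nat \<Rightarrow> nat) \<Rightarrow> nat \<Rightarrow> fm" where "Fk ks j = fmp gg AA (take (ks j) (pth j))"

definition I1 :: "(nat \<Rightarrow> nat) \<Rightarrow> bool" where
  "I1 ks \<longleftrightarrow> (\<forall>a<MM. \<forall>b<MM. \<forall>p<mm. qs ! p \<longrightarrow> take (Suc p) (pth a) = take (Suc p) (pth b) \<longrightarrow>
       ks a \<le> p \<longrightarrow> ks b \<le> p)"

definition V :: "(nat \<Rightarrow> nat) \<Rightarrow> nat \<Rightarrow> nat" where
  "V ks j = tsize (pth j ! (ks j - 1)) * Suc mm + (ks j - 1)"

lemma E_len: "j < MM \<Longrightarrow> length (Ess ! j) = nE qs"
  using Elen by auto

lemma pth_len[simp]: "length (pth j) = mm"
  by (simp add: pth_def hp_def)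

lemma pth_nth: "i < mm \<Longrightarrow> pth j ! i = (if qs ! i then Fun (NF + i) (take (cnt qs i) (Ess ! j)) else Ess ! j ! cnt qs i)"
  by (simp add: pth_def hp_def)

lemma cnt_E: "i < mm \<Longrightarrow> \<not> qs ! i \<Longrightarrow> cnt qs i < nE qs"
  using cnt_lt[of i mm qs] cnt_len[of qs] by simp

lemma fm_take: "k \<le> mm \<Longrightarrow> fmp gg AA (take k (pth j)) = substf (psub gg qs Var (take k (pth j))) (quant (drop k qs) B)"
  using fmp_quant[of "take k (pth j)" qs gg Var B] by simp

lemma fm_forall: "p < mm \<Longrightarrow> qs ! p \<Longrightarrow> fmp gg AA (take p (pth j)) = Forall (unq (fmp gg AA (take p (pth j))))"
  using fm_take[of p j] by (simp add: Cons_nth_drop_Suc[symmetric])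

lemma fm_exists: "p < mm \<Longrightarrow> \<not> qs ! p \<Longrightarrow> fmp gg AA (take p (pth j)) = Exists (unq (fmp gg AA (take p (pth j))))"
  using fm_take[of p j] by (simp add: Cons_nth_drop_Suc[symmetric])

lemma fm_snoc: "p < mm \<Longrightarrow> fmp gg AA (take (Suc p) (pth j)) = inst1 (unq (fmp gg AA (take p (pth j)))) (gg (pth j ! p))"
  by (simp add: take_Suc_conv_app_nth fmp_snoc)

lemma fv_fm: "k \<le> mm \<Longrightarrow> y \<in> fvf (fmp gg AA (take k (pth j))) \<Longrightarrow>
   y \<in> fvf AA \<or> (\<exists>i<k. y \<in> fvt (gg (pth j ! i)))"
proof -
  assume k: "k \<le> mm" and y: "y \<in> fvf (fmp gg AA (take k (pth j)))"
  have "fvf (fmp gg (substf Var AA) (take k (pth j))) \<subseteq> fvf (substf Var AA) \<union> (\<Union>w\<in>set (take k (pth j)). fvt (gg w))"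
    by (rule fvf_fmp) (simp add: k)
  then have "fvf (fmp gg AA (take k (pth j))) \<subseteq> fvf AA \<union> (\<Union>w\<in>set (take k (pth j)). fvt (gg w))"
    by (simp only: substf_Var)
  then have "y \<in> fvf AA \<union> (\<Union>w\<in>set (take k (pth j)). fvt (gg w))" using y by (rule subsetD)
  then show ?thesis
  proof
    assume "y \<in> fvf AA" then show ?thesis by blast
  next
    assume "y \<in> (\<Union>w\<in>set (take k (pth j)). fvt (gg w))"
    then obtain w where w: "w \<in> set (take k (pth j))" "y \<in> fvt (gg w)" by blast
    from in_set_take_nth[OF w(1)] obtain i where "i < k" "w = pth j ! i" by blast
    then show ?thesis using w(2) by blast
  qed
qed

lemma fvt_univ: "i < mm \<Longrightarrow> qs ! i \<Longrightarrow> fvt (gg (pth j ! i)) = {N + to_nat (pth j ! i)}"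
  by (simp add: pth_nth)

lemma fvt_ex: "j < MM \<Longrightarrow> i < mm \<Longrightarrow> \<not> qs ! i \<Longrightarrow> N \<le> y \<Longrightarrow> y \<in> fvt (gg (pth j ! i)) \<Longrightarrow>
   \<exists>u\<in>subt (pth j ! i). y = N + to_nat u"
proof -
  assume a: "j < MM" "i < mm" "\<not> qs ! i" "N \<le> y" "y \<in> fvt (gg (pth j ! i))"
  have e: "pth j ! i = Ess ! j ! cnt qs i" using a by (simp add: pth_nth)
  have "cnt qs i < length (Ess ! j)" using a cnt_E E_len by simp
  then have "Ess ! j ! cnt qs i \<in> set (Ess ! j)" by simp
  moreover have "Ess ! j \<in> set Ess" using a by simp
  ultimately have "\<forall>i\<in>fvt (Ess ! j ! cnt qs i). i < N" using NE by blast
  then have lt: "\<forall>i\<in>fvt (pth j ! i). i < N" using e by simp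
  from fvt_gt[OF a(5)] show ?thesis
  proof
    assume "y \<in> fvt (pth j ! i)"
    then have "y < N" using lt by blast
    then show ?thesis using a(4) by simp
  qed
qed

lemma same_node:
  assumes j: "j < MM" "j' < MM" and p: "p < mm" "qs ! p" and eq: "pth j' ! p = pth j ! p"
  shows "take (Suc p) (pth j') = take (Suc p) (pth j)"
proof -
  have tk: "take (cnt qs p) (Ess ! j') = take (cnt qs p) (Ess ! j)" using eq p by (simp add: pth_nth)
  have "pth j' ! i = pth j ! i" if i: "i \<le> p" for i
  proof (cases "qs ! i")
    case True
    have "cnt qs i \<le> cnt qs p" using i by (rule cnt_mono)
    then have "take (cnt qs i) (Ess ! j') = take (cnt qs i) (Ess ! j)"
      using tk by (metis min.absorb1 take_take)
    then show ?thesis using True i p by (simp add: pth_nth)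
  next
    case False
    then have "i < p" using i p by (metis le_neq_implies_less)
    then have c: "cnt qs i < cnt qs p" using cnt_lt[of i p qs] False p by simp
    have "Ess ! j' ! cnt qs i = take (cnt qs p) (Ess ! j') ! cnt qs i" using c by simp
    also have "\<dots> = take (cnt qs p) (Ess ! j) ! cnt qs i" using tk by simp
    also have "\<dots> = Ess ! j ! cnt qs i" using c by simp
    finally show ?thesis using False i p by (simp add: pth_nth)
  qed
  then show ?thesis using p by (intro nth_equalityI) auto
qed

lemma sz_univ_mono:
  assumes j: "j < MM" "j' < MM" and pp: "p \<le> p'" "p' < mm" "qs ! p" "qs ! p'"
    and tk: "take (Suc p) (pth j') = take (Suc p) (pth j)"
  shows "tsize (pth j ! p) \<le> tsize (pth j' ! p')"
proof -
  have "pth j ! p = take (Suc p) (pth j) ! p" by simp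
  also have "\<dots> = pth j' ! p" using tk by (metis lessI nth_take)
  finally have e: "pth j ! p = pth j' ! p" .
  have "cnt qs p \<le> cnt qs p'" using pp by (intro cnt_mono)
  then have "sum_list (map tsize (take (cnt qs p) (Ess ! j'))) \<le> sum_list (map tsize (take (cnt qs p') (Ess ! j')))"
    by (rule sum_take_mono)
  then show ?thesis using e pp by (simp add: pth_nth)
qed

lemma sz_ex_lt:
  assumes j: "j < MM" and ip: "i < p'" "p' < mm" "\<not> qs ! i" "qs ! p'"
  shows "tsize (pth j ! i) < tsize (pth j ! p')"
proof -
  have c: "cnt qs i < cnt qs p'" using cnt_lt[of i p' qs] ip by simp
  have "cnt qs p' \<le> nE qs" using cnt_mono[of p' mm qs] cnt_len[of qs] ip by simp
  then have "cnt qs i < length (Ess ! j)" using c E_len j by simp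
  then have "Ess ! j ! cnt qs i \<in> set (take (cnt qs p') (Ess ! j))" using c
    by (metis in_set_conv_nth length_take min_less_iff_conj nth_take)
  then have "tsize (Ess ! j ! cnt qs i) < tsize (Fun (NF + p') (take (cnt qs p') (Ess ! j)))"
    by (rule tsize_mem)
  then show ?thesis using ip by (simp add: pth_nth)
qed

lemma core_main:
  "(\<forall>j<MM. ks j \<le> mm) \<Longrightarrow> I1 ks \<Longrightarrow> Disjs (map (Fk ks) [0..<MM]) \<in> L \<Longrightarrow> AA \<in> L"
proof (induction "\<Sum>j<MM. ks j" arbitrary: ks rule: less_induct)
  case less
  note bnd = less.prems(1) and inv = less.prems(2) and D = less.prems(3)
  show ?case
  proof (cases "\<forall>j<MM. ks j = 0")
    case True
    have "IQ (Impl (Disjs (map (Fk ks) [0..<MM])) AA)"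
    proof (rule Disjs_elim)
      fix x assume "x \<in> set (map (Fk ks) [0..<MM])"
      then obtain j where "j < MM" "x = Fk ks j" by auto
      then have "x = AA" using True by (simp add: Fk_def)
      then show "IQ (Impl x AA)" by (simp add: d_refl)
    qed
    then show ?thesis using D impL by blast
  next
    case False
    then obtain j0 where j0: "j0 < MM" "ks j0 \<noteq> 0" by blast
    show ?thesis
    proof (cases "\<exists>j<MM. 0 < ks j \<and> \<not> qs ! (ks j - 1)")
      case True
      then obtain j where j: "j < MM" "0 < ks j" "\<not> qs ! (ks j - 1)" by blast
      define p where "p = ks j - 1"
      have kp: "ks j = Suc p" using j(2) p_def by simp
      have pm: "p < mm" using bnd j(1) kp by fastforce
      have qp: "\<not> qs ! p" using j(3) p_def by simp
      define ks' where "ks' = ks(j := p)"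
      have Fj: "IQ (Impl (Fk ks j) (Fk ks' j))"
      proof -
        have "Fk ks j = inst1 (unq (fmp gg AA (take p (pth j)))) (gg (pth j ! p))"
          unfolding Fk_def kp using pm by (rule fm_snoc)
        moreover have "Fk ks' j = Exists (unq (fmp gg AA (take p (pth j))))"
          unfolding Fk_def ks'_def using fm_exists[OF pm qp] by simp
        ultimately show ?thesis by (simp add: deriv.ax_ExI)
      qed
      have "IQ (Impl (Disjs (map (Fk ks) [0..<MM])) (Disjs (map (Fk ks') [0..<MM])))"
      proof (rule Disjs_elim)
        fix x assume "x \<in> set (map (Fk ks) [0..<MM])"
        then obtain j' where j': "j' < MM" "x = Fk ks j'" by auto
        have inl: "Fk ks' j' \<in> set (map (Fk ks') [0..<MM])" using j' by simp
        show "IQ (Impl x (Disjs (map (Fk ks') [0..<MM])))"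
        proof (cases "j' = j")
          case True
          have inlj: "Fk ks' j \<in> set (map (Fk ks') [0..<MM])" using j(1) by simp
          show ?thesis using d_trans[OF Fj Disjs_in[OF inlj]] True j'(2) by simp
        next
          case False then have "Fk ks' j' = Fk ks j'" by (simp add: Fk_def ks'_def)
          then show ?thesis using Disjs_in[OF inl] j' by simp
        qed
      qed
      then have D': "Disjs (map (Fk ks') [0..<MM]) \<in> L" using D impL by blast
      have lt: "(\<Sum>j<MM. ks' j) < (\<Sum>j<MM. ks j)"
      proof (rule sum_strict_mono_ex1)
        show "\<forall>x\<in>{..<MM}. ks' x \<le> ks x" by (simp add: ks'_def kp)
        show "\<exists>a\<in>{..<MM}. ks' a < ks a" using j(1) kp by (auto simp: ks'_def)
      qed simp
      have bnd': "\<forall>j<MM. ks' j \<le> mm" using bnd pm by (simp add: ks'_def)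
      have inv': "I1 ks'"
        unfolding I1_def
      proof (intro allI impI)
        fix a b p0 assume a: "a < MM" and b: "b < MM" and p0: "p0 < mm" and q0: "qs ! p0"
          and tk: "take (Suc p0) (pth a) = take (Suc p0) (pth b)" and ka: "ks' a \<le> p0"
        have "ks a \<le> p0"
        proof (cases "a = j")
          case True
          then have "p \<le> p0" using ka by (simp add: ks'_def)
          moreover have "p \<noteq> p0" using q0 qp by auto
          ultimately show ?thesis using True kp by simp
        next
          case False then show ?thesis using ka by (simp add: ks'_def)
        qed
        then have "ks b \<le> p0" using inv a b p0 q0 tk unfolding I1_def by blast
        then show "ks' b \<le> p0" using kp by (auto simp: ks'_def)
      qed
      show ?thesis using less.hyps[OF lt bnd' inv' D'] .
    next
      case False
      then have univ: "\<And>j. j < MM \<Longrightarrow> 0 < ks j \<Longrightarrow> qs ! (ks j - 1)" by blast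
      define S where "S = {j. j < MM \<and> 0 < ks j}"
      have finS: "finite S" by (simp add: S_def)
      have neS: "S \<noteq> {}" using j0 by (auto simp: S_def)
      have "Max (V ks ` S) \<in> V ks ` S" using finS neS by simp
      then obtain j where jS: "j \<in> S" and jM: "V ks j = Max (V ks ` S)" by auto
      have jmax: "\<And>j'. j' \<in> S \<Longrightarrow> V ks j' \<le> V ks j"
        unfolding jM using finS by simp
      have j: "j < MM" "0 < ks j" using jS by (auto simp: S_def)
      define p where "p = ks j - 1"
      have kp: "ks j = Suc p" using j(2) p_def by simp
      have pm: "p < mm" using bnd j(1) kp by fastforce
      have qp: "qs ! p" using univ[OF j] p_def by simp
      define u where "u = pth j ! p"
      define y where "y = N + to_nat u"
      have Ny: "N \<le> y" by (simp add: y_def)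
      have gu: "gg u = Var y" using pm qp by (simp add: u_def y_def pth_nth)
      define J where "J = {j'. j' < MM \<and> take (Suc p) (pth j') = take (Suc p) (pth j)}"
      have jJ: "j \<in> J" using j by (simp add: J_def)
      define \<Phi> where "\<Phi> = unq (fmp gg AA (take p (pth j)))"
      have FmF: "fmp gg AA (take p (pth j)) = Forall \<Phi>" using fm_forall[OF pm qp] \<Phi>_def by simp
      have Fmu: "fmp gg AA (take (Suc p) (pth j)) = inst1 \<Phi> (Var y)"
        using fm_snoc[OF pm, of j] \<Phi>_def gu u_def by simp
      have Vj: "V ks j = tsize u * Suc mm + p" by (simp add: V_def u_def p_def)
      have yA: "y \<notin> fvf AA" using NA Ny by fastforce
      have C1: "ks j' = Suc p" if "j' \<in> J" for j'
      proof -
        have j': "j' < MM" and tk: "take (Suc p) (pth j') = take (Suc p) (pth j)" using that by (auto simp: J_def)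
        show "ks j' = Suc p"
        proof (rule ccontr)
          assume ne: "ks j' \<noteq> Suc p"
          show False
          proof (cases "ks j' \<le> p")
            case True
            then have "ks j \<le> p" using inv j' j(1) pm qp tk unfolding I1_def by blast
            then show False using kp by simp
          next
            case False
            then have gt: "Suc p < ks j'" using ne by simp
            define p' where "p' = ks j' - 1"
            have j'S: "j' \<in> S" using j' gt by (simp add: S_def)
            have p'm: "p' < mm" using bnd j' gt p'_def by fastforce
            have qp': "qs ! p'" using univ[OF j'] gt p'_def by simp
            have pp': "p < p'" using gt p'_def by simp
            have "tsize u \<le> tsize (pth j' ! p')" unfolding u_def
              using sz_univ_mono[OF j(1) j' _ p'm qp qp' tk] pp' by simp
            then have "tsize u * Suc mm \<le> tsize (pth j' ! p') * Suc mm" by (rule mult_right_mono) simp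
            then have "V ks j < V ks j'" using Vj pp' by (simp add: V_def p'_def)
            then show False using jmax[OF j'S] by simp
          qed
        qed
      qed
      have C2: "y \<notin> fvf (Fk ks j')" if j': "j' < MM" "j' \<notin> J" for j'
      proof
        assume yin: "y \<in> fvf (Fk ks j')"
        have k'm: "ks j' \<le> mm" using bnd j' by simp
        from fv_fm[OF k'm yin[unfolded Fk_def]]
        show False
        proof
          assume "y \<in> fvf AA" then show False using yA by simp
        next
          assume "\<exists>i<ks j'. y \<in> fvt (gg (pth j' ! i))"
          then obtain i where i: "i < ks j'" "y \<in> fvt (gg (pth j' ! i))" by blast
          have im: "i < mm" using i k'm by simp
          show False
          proof (cases "qs ! i")
            case True
            have "y = N + to_nat (pth j' ! i)" using i(2) fvt_univ[OF im True] by simp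
            then have pu: "pth j' ! i = u" using y_def by simp
            then have "i = p" using im pm True qp by (simp add: u_def pth_nth)
            then have "take (Suc p) (pth j') = take (Suc p) (pth j)"
              using same_node[OF j(1) j'(1) pm qp] pu u_def by simp
            then show False using j' by (simp add: J_def)
          next
            case False
            obtain u' where u': "u' \<in> subt (pth j' ! i)" "y = N + to_nat u'"
              using fvt_ex[OF j'(1) im False Ny i(2)] by blast
            then have "u' = u" using y_def by simp
            then have s1: "tsize u \<le> tsize (pth j' ! i)" using subt_size u'(1) by simp
            define p' where "p' = ks j' - 1"
            have pos: "0 < ks j'" using i by simp
            have j'S: "j' \<in> S" using j' pos by (simp add: S_def)
            have qp': "qs ! p'" using univ[OF j'(1) pos] p'_def by simp
            have "i \<le> p'" using i p'_def by simp
            moreover have "i \<noteq> p'" using qp' False by auto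
            ultimately have ip': "i < p'" by simp
            have p'm: "p' < mm" using k'm pos p'_def by simp
            have s2: "tsize (pth j' ! i) < tsize (pth j' ! p')" using sz_ex_lt[OF j'(1) ip' p'm False qp'] .
            have "Suc (tsize u) \<le> tsize (pth j' ! p')" using s1 s2 by simp
            then have "Suc (tsize u) * Suc mm \<le> tsize (pth j' ! p') * Suc mm" by (rule mult_right_mono) simp
            then have "V ks j < V ks j'" using Vj pm by (simp add: V_def p'_def)
            then show False using jmax[OF j'S] by simp
          qed
        qed
      qed
      have C3: "y \<notin> fvf (Forall \<Phi>)"
      proof
        assume "y \<in> fvf (Forall \<Phi>)"
        then have yin: "y \<in> fvf (fmp gg AA (take p (pth j)))" using FmF by simp
        have pl: "p \<le> mm" using pm by simp
        from fv_fm[OF pl yin]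
        show False
        proof
          assume "y \<in> fvf AA" then show False using yA by simp
        next
          assume "\<exists>i<p. y \<in> fvt (gg (pth j ! i))"
          then obtain i where i: "i < p" "y \<in> fvt (gg (pth j ! i))" by blast
          have im: "i < mm" using i pm by simp
          show False
          proof (cases "qs ! i")
            case True
            have "y = N + to_nat (pth j ! i)" using i(2) fvt_univ[OF im True] by simp
            then have pu: "pth j ! i = u" using y_def by simp
            then have "i = p" using im pm True qp by (simp add: u_def pth_nth)
            then show False using i by simp
          next
            case False
            obtain u' where u': "u' \<in> subt (pth j ! i)" "y = N + to_nat u'"
              using fvt_ex[OF j(1) im False Ny i(2)] by blast
            then have "u' = u" using y_def by simp
            then have s1: "tsize u \<le> tsize (pth j ! i)" using subt_size u'(1) by simp
            have s2: "tsize (pth j ! i) < tsize (pth j ! p)" using sz_ex_lt[OF j(1) i(1) pm False qp] .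
            then show False using s1 u_def by simp
          qed
        qed
      qed
      define R where "R = map (Fk ks) (filter (\<lambda>j'. j' \<notin> J) [0..<MM])"
      have FJ: "Fk ks j' = inst1 \<Phi> (Var y)" if "j' \<in> J" for j'
        using C1[OF that] that Fmu by (simp add: Fk_def J_def)
      have step1: "IQ (Impl (Disjs (map (Fk ks) [0..<MM])) (Disj (inst1 \<Phi> (Var y)) (Disjs R)))"
      proof (rule Disjs_elim)
        fix x assume "x \<in> set (map (Fk ks) [0..<MM])"
        then obtain j' where j': "j' < MM" "x = Fk ks j'" by auto
        show "IQ (Impl x (Disj (inst1 \<Phi> (Var y)) (Disjs R)))"
        proof (cases "j' \<in> J")
          case True then show ?thesis using FJ j' by (simp add: deriv.ax_DisjI1)
        next
          case False
          then have "x \<in> set R" using j' by (simp add: R_def)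
          then show ?thesis using d_trans[OF Disjs_in deriv.ax_DisjI2] by blast
        qed
      qed
      have yR: "y \<notin> fvf (Disjs R)"
      proof
        assume "y \<in> fvf (Disjs R)"
        then obtain x where x: "x \<in> set R" "y \<in> fvf x" using fvf_Disjs by blast
        then obtain j' where "j' < MM" "j' \<notin> J" "x = Fk ks j'" by (auto simp: R_def)
        then show False using C2 x(2) by blast
      qed
      have "Disj (inst1 \<Phi> (Var y)) (Disjs R) \<in> L" using D step1 impL by blast
      then have DR: "Disj (Forall \<Phi>) (Disjs R) \<in> L" using allR_var[OF cd _ C3 yR] by blast
      define ks' where "ks' = (\<lambda>j'. if j' \<in> J then p else ks j')"
      have FJ': "Fk ks' j' = Forall \<Phi>" if "j' \<in> J" for j'
      proof -
        have "take p (pth j') = take p (take (Suc p) (pth j'))" by simp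
        also have "\<dots> = take p (take (Suc p) (pth j))" using that by (simp add: J_def)
        also have "\<dots> = take p (pth j)" by simp
        finally show ?thesis using that FmF by (simp add: Fk_def ks'_def)
      qed
      have "IQ (Impl (Disj (Forall \<Phi>) (Disjs R)) (Disjs (map (Fk ks') [0..<MM])))"
      proof (rule d_disjE)
        have "Fk ks' j \<in> set (map (Fk ks') [0..<MM])" using j by simp
        then show "IQ (Impl (Forall \<Phi>) (Disjs (map (Fk ks') [0..<MM])))" using FJ'[OF jJ] Disjs_in by simp
        show "IQ (Impl (Disjs R) (Disjs (map (Fk ks') [0..<MM])))"
        proof (rule Disjs_elim)
          fix x assume "x \<in> set R"
          then obtain j' where j': "j' < MM" "j' \<notin> J" "x = Fk ks j'" by (auto simp: R_def)
          then have "x = Fk ks' j'" by (simp add: Fk_def ks'_def)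
          then have "x \<in> set (map (Fk ks') [0..<MM])" using j' by simp
          then show "IQ (Impl x (Disjs (map (Fk ks') [0..<MM])))" by (rule Disjs_in)
        qed
      qed
      then have D': "Disjs (map (Fk ks') [0..<MM]) \<in> L" using DR impL by blast
      have le: "ks' x \<le> ks x" for x using C1 by (simp add: ks'_def)
      have lt: "(\<Sum>j<MM. ks' j) < (\<Sum>j<MM. ks j)"
      proof (rule sum_strict_mono_ex1)
        show "\<forall>x\<in>{..<MM}. ks' x \<le> ks x" using le by simp
        have "ks' j < ks j" using kp jJ by (simp add: ks'_def)
        then show "\<exists>a\<in>{..<MM}. ks' a < ks a" using j(1) by blast
      qed simp
      have bnd': "\<forall>j<MM. ks' j \<le> mm" using bnd le order_trans by blast
      have inv': "I1 ks'"
        unfolding I1_def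
      proof (intro allI impI)
        fix a b p0 assume a: "a < MM" and b: "b < MM" and p0: "p0 < mm" and q0: "qs ! p0"
          and tk: "take (Suc p0) (pth a) = take (Suc p0) (pth b)" and ka: "ks' a \<le> p0"
        show "ks' b \<le> p0"
        proof (cases "a \<in> J")
          case False
          then have "ks a \<le> p0" using ka by (simp add: ks'_def)
          then have "ks b \<le> p0" using inv a b p0 q0 tk unfolding I1_def by blast
          then show ?thesis using le[of b] by simp
        next
          case True
          then have pp0: "p \<le> p0" using ka by (simp add: ks'_def)
          show ?thesis
          proof (cases "p0 = p")
            case True
            have "take (Suc p) (pth b) = take (Suc p) (pth j)"
              using tk \<open>a \<in> J\<close> True by (simp add: J_def)
            then have "b \<in> J" using b by (simp add: J_def)
            then show ?thesis using True by (simp add: ks'_def)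
          next
            case False
            then have "ks a \<le> p0" using C1[OF True] pp0 by simp
            then have "ks b \<le> p0" using inv a b p0 q0 tk unfolding I1_def by blast
            then show ?thesis using le[of b] by simp
          qed
        qed
      qed
      show ?thesis using less.hyps[OF lt bnd' inv' D'] .
    qed
  qed
qed

end

lemma prenex_quant: "prenex A \<Longrightarrow> \<exists>qs B. A = quant qs B \<and> qfree B"
proof (induction rule: prenex.induct)
  case (1 A) then show ?case by (intro exI[of _ "[]"]) auto
next
  case (2 A)
  then obtain qs B where "A = quant qs B" "qfree B" by blast
  then show ?case by (intro exI[of _ "True # qs"] exI[of _ B]) simp
next
  case (3 A)
  then obtain qs B where "A = quant qs B" "qfree B" by blast
  then show ?case by (intro exI[of _ "False # qs"] exI[of _ B]) simp
qed

lemma qfree_substf: "qfree B \<Longrightarrow> qfree (substf s B)"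
  by (induction B) auto

lemma part2:
  assumes i1: "intermediate QL1" and i2: "intermediate QL2"
    and pf: "prop_fragment QL1 = prop_fragment QL2" and he: "herbrand_existential QL2"
    and cd: "CD_instances \<subseteq> QL1" and pA: "prenex A" and A2: "A \<in> QL2"
  shows "A \<in> QL1"
proof -
  obtain qs B where A: "A = quant qs B" and qB: "qfree B" using prenex_quant[OF pA] by blast
  obtain NF where NF: "\<forall>f\<in>fsymf B. f < NF"
    using finite_fsymf[of B] finite_nat_set_iff_bounded by blast
  define \<tau> where "\<tau> = skt NF qs Var 0 0"
  define n where "n = nE qs"
  define H' where "H' = substf \<tau> B"
  have "IQ (Impl (substf Var (quant qs B)) (quant (replicate (nE qs) False) (substf (skt NF qs Var 0 0) B)))"
    by (rule sk_imp)
  then have "IQ (Impl A (quant (replicate n False) H'))" by (simp add: A H'_def \<tau>_def n_def)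
  then have "exs n H' \<in> QL2" using ilog.impL[OF ilogI[OF i2]] A2 by (simp add: exs_quant)
  moreover have "qfree H'" using qB by (simp add: H'_def qfree_substf)
  ultimately obtain tss where pv: "provL (prop_fragment QL2) (Disjs (map (inst_n n H') tss))"
    using he unfolding herbrand_existential_def by blast
  define Es where "Es = (\<lambda>ts::nat\<Rightarrow>trm. map (\<lambda>c. ts (n - 1 - c)) [0..<n])"
  define Ess where "Ess = map Es tss"
  have "finite (fvf A \<union> (\<Union>Es'\<in>set Ess. \<Union>e\<in>set Es'. fvt e))" by simp
  then obtain N where Nb: "\<forall>i\<in>fvf A \<union> (\<Union>Es'\<in>set Ess. \<Union>e\<in>set Es'. fvt e). i < N"
    using finite_nat_set_iff_bounded by blast
  have "provL (prop_fragment QL2) (gm (gt NF N) (Disjs (map (inst_n n H') tss)))"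
    by (rule provL_gm[OF pv]) (simp add: prop_fragment_def)
  then have D: "Disjs (map (gm (gt NF N) \<circ> inst_n n H') tss) \<in> QL1"
    using ilog.provL_in[OF ilogI[OF i1]] pf by (simp add: gm_Disjs)
  interpret C: core QL1 qs B NF N Ess
  proof (unfold_locales)
    show "intermediate QL1" by (rule i1)
    show "CD_instances \<subseteq> QL1" by (rule cd)
    show "\<forall>Es\<in>set Ess. length Es = nE qs" by (auto simp: Ess_def Es_def n_def)
    show "\<forall>i\<in>fvf (quant qs B). i < N" using Nb A by blast
    show "\<forall>Es\<in>set Ess. \<forall>e\<in>set Es. \<forall>i\<in>fvt e. i < N" using Nb by blast
  qed
  have eq: "gm (gt NF N) (inst_n n H' ts) = fmp (gt NF N) A (hp NF qs (Es ts) 0 0)" for ts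
  proof -
    have lE: "length (Es ts) = n" by (simp add: Es_def)
    have e1: "(\<lambda>i. if i < n then ts i else Var (i - n)) = ev (Es ts) n"
    proof
      fix i show "(if i < n then ts i else Var (i - n)) = ev (Es ts) n i"
      proof (cases "i < n")
        case True
        then have "Es ts ! (n - 1 - i) = ts (n - 1 - (n - 1 - i))" by (simp add: Es_def)
        moreover have "n - 1 - (n - 1 - i) = i" using True by simp
        ultimately show ?thesis using True by (simp add: ev_def)
      qed (simp add: ev_def)
    qed
    have "gm (gt NF N) (inst_n n H' ts) = gm (gt NF N) (substf (\<lambda>i. substt (ev (Es ts) n) (\<tau> i)) B)"
      by (simp add: inst_n_def e1 H'_def substf_comp)
    also have "\<dots> = substf (\<lambda>i. gt NF N (substt (ev (Es ts) n) (\<tau> i))) B"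
      by (rule gm_substf[OF qB NF])
    also have "(\<lambda>i. gt NF N (substt (ev (Es ts) n) (\<tau> i))) = psub (gt NF N) qs Var (hp NF qs (Es ts) 0 0)"
    proof -
      have "psub (gt NF N) qs Var (hp NF qs (Es ts) 0 0) =
          (\<lambda>i. gt NF N (substt (ev (Es ts) (length (Es ts))) (skt NF qs Var 0 0 i)))"
        by (rule corr) (auto simp: lE n_def ev_def)
      then show ?thesis using lE by (simp add: \<tau>_def)
    qed
    also have "substf (psub (gt NF N) qs Var (hp NF qs (Es ts) 0 0)) B = fmp (gt NF N) A (hp NF qs (Es ts) 0 0)"
      using fmp_quant[of "hp NF qs (Es ts) 0 0" qs "gt NF N" Var B] A by (simp add: hp_def)
    finally show ?thesis .
  qed
  have "map (gm (gt NF N) \<circ> inst_n n H') tss = map (C.Fk (\<lambda>_. length qs)) [0..<length Ess]"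
  proof (rule nth_equalityI)
    show "length (map (gm (gt NF N) \<circ> inst_n n H') tss) = length (map (C.Fk (\<lambda>_. length qs)) [0..<length Ess])"
      by (simp add: Ess_def)
    fix k assume "k < length (map (gm (gt NF N) \<circ> inst_n n H') tss)"
    then have k: "k < length tss" by simp
    have "C.Fk (\<lambda>_. length qs) k = fmp (gt NF N) A (C.pth k)"
      by (simp add: C.Fk_def A)
    also have "C.pth k = hp NF qs (Es (tss ! k)) 0 0" unfolding C.pth_def using k by (simp add: Ess_def)
    finally show "map (gm (gt NF N) \<circ> inst_n n H') tss ! k = map (C.Fk (\<lambda>_. length qs)) [0..<length Ess] ! k"
      using k eq by (simp add: Ess_def)
  qed
  then have DD: "Disjs (map (C.Fk (\<lambda>_. length qs)) [0..<length Ess]) \<in> QL1" using D by simp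
  have II: "C.I1 (\<lambda>_. length qs)" by (simp add: C.I1_def)
  have BB: "\<forall>j<length Ess. (\<lambda>_. length qs) j \<le> length qs" by simp
  have "quant qs B \<in> QL1" by (rule C.core_main[OF BB II DD])
  then show ?thesis using A by simp
qed

theorem mainTheorem17:
  assumes "intermediate QL1" and "intermediate QL2" and "QL1 \<subseteq> QL2"
    and "prop_fragment QL1 = prop_fragment QL2"
    and "herbrand_existential QL2"
  shows "(\<forall>A. existential A \<longrightarrow> (A \<in> QL1 \<longleftrightarrow> A \<in> QL2))
       \<and> (CD_instances \<subseteq> QL1 \<longrightarrow> (\<forall>A. prenex A \<longrightarrow> (A \<in> QL1 \<longleftrightarrow> A \<in> QL2)))"
proof (intro conjI allI impI)
  fix A assume "existential A"
  then show "A \<in> QL1 \<longleftrightarrow> A \<in> QL2" using part1[OF assms(1,3,4,5)] by blast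
next
  fix A assume cd: "CD_instances \<subseteq> QL1" and p: "prenex A"
  show "A \<in> QL1 \<longleftrightarrow> A \<in> QL2"
  proof
    assume "A \<in> QL1" then show "A \<in> QL2" using assms(3) by blast
  next
    assume "A \<in> QL2" then show "A \<in> QL1" using part2[OF assms(1,2,4,5) cd p] by blast
  qed
qed

end
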